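(* For each integer $s\geq 2$, \[\lim_{t\to\infty}\sqrt[t]{A_{321}(K_{s,t}^\beta)}=2^s.\]
   Context: The comb $K_{s,t}$ has elements $e_{i,j}$, $1\le i\le s$, $1\le j\le t$, with partial order generated by the covers $e_{i,1}\lessdot e_{i+1,1}$ ($1\le i\le s-1$) and $e_{i,j}\lessdot e_{i,j+1}$ ($1\le j\le t-1$). $K^\beta_{s,t}$ is the labeled poset on $[st]$ obtained by giving $e_{i,j}$ the label $(i-1)t+j$. A linear extension is a permutation of $[st]$ in which $x$ precedes $y$ whenever $x<y$ in the poset; $A_{321}(P)$ is the number of linear extensions of $P$ avoiding the pattern $321$. *)

theory Defs
  imports Complex_Main
begin

(* label of the comb element e_{i,j}, 1 <= i <= s, 1 <= j <= t *)
definition comb_label :: "nat \<Rightarrow> nat \<Rightarrow> nat \<Rightarrow> nat" where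
  "comb_label t i j = (i - 1) * t + j"

definition comb_covers :: "nat \<Rightarrow> nat \<Rightarrow> (nat \<times> nat) set" where
  "comb_covers s t =
     {(comb_label t i 1, comb_label t (i + 1) 1) | i. 1 \<le> i \<and> i \<le> s - 1}
   \<union> {(comb_label t i j, comb_label t i (j + 1)) | i j. 1 \<le> i \<and> i \<le> s \<and> 1 \<le> j \<and> j \<le> t - 1}"

definition comb_less :: "nat \<Rightarrow> nat \<Rightarrow> (nat \<times> nat) set" where
  "comb_less s t = (comb_covers s t)\<^sup>+"

definition linear_extensions :: "nat \<Rightarrow> nat \<Rightarrow> nat list set" where
  "linear_extensions s t =
     {w. distinct w \<and> set w = {1..s * t} \<and>
         (\<forall>a b. a < length w \<and> b < length w \<and> (w ! a, w ! b) \<in> comb_less s t \<longrightarrow> a < b)}"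

definition contains_321 :: "nat list \<Rightarrow> bool" where
  "contains_321 w \<longleftrightarrow>
     (\<exists>a b c. a < b \<and> b < c \<and> c < length w \<and> w ! a > w ! b \<and> w ! b > w ! c)"

definition A321_comb :: "nat \<Rightarrow> nat \<Rightarrow> nat" where
  "A321_comb s t = card {w \<in> linear_extensions s t. \<not> contains_321 w}"

end

theory Submission
  imports Defs "HOL-Library.FuncSet"
begin


definition blk :: "nat \<Rightarrow> nat \<Rightarrow> nat" where "blk t v = (v - 1) div t + 1"
definition cntb :: "(nat \<Rightarrow> nat) \<Rightarrow> nat \<Rightarrow> nat" where
  "cntb B p = card {q. q < p \<and> B q = B p}"
definition Wf :: "nat \<Rightarrow> (nat \<Rightarrow> nat) \<Rightarrow> nat \<Rightarrow> nat" where
  "Wf t B p = (B p - 1) * t + cntb B p + 1"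

lemma cnt_mono:
  assumes "p < p'" "B p = B p'"
  shows "cntb B p < cntb B p'"
  unfolding cntb_def
  by (rule psubset_card_mono) (use assms in auto)

locale blockfun =
  fixes s t :: nat and B :: "nat \<Rightarrow> nat"
  assumes t_pos: "t \<ge> 1"
  and hB: "\<And>p. p < s*t \<Longrightarrow> 1 \<le> B p \<and> B p \<le> s"
  and hC: "\<And>k. 1 \<le> k \<Longrightarrow> k \<le> s \<Longrightarrow> card {p. p < s*t \<and> B p = k} = t"
begin

lemma cnt_lt: assumes "p < s*t" shows "cntb B p < t"
proof -
  have "card {q. q < p \<and> B q = B p} < card {q. q < s*t \<and> B q = B p}"
    by (rule psubset_card_mono) (use assms in auto)
  also have "\<dots> = t" using hC hB assms by auto
  finally show ?thesis unfolding cntb_def .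
qed

lemma W_range: assumes "p < s*t" shows "1 \<le> Wf t B p \<and> Wf t B p \<le> s*t"
proof -
  have c: "cntb B p < t" by (rule cnt_lt[OF assms])
  have b: "B p - 1 \<le> s - 1" using hB[OF assms] by auto
  have "(B p - 1) * t \<le> (s - 1) * t" using b by (rule mult_le_mono1)
  moreover have "s \<ge> 1" using hB[OF assms] by auto
  moreover have "(s - 1) * t + t = s * t" using \<open>s \<ge> 1\<close> by (simp add: algebra_simps)
  ultimately show ?thesis unfolding Wf_def using c by linarith
qed

lemma blk_W: assumes "p < s*t" shows "blk t (Wf t B p) = B p"
proof -
  have c: "cntb B p < t" by (rule cnt_lt[OF assms])
  have "((B p - 1) * t + cntb B p) div t = B p - 1" using c by simp
  then show ?thesis using hB[OF assms] unfolding blk_def Wf_def by simp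
qed

lemma W_mono: assumes "p < p'" "B p = B p'" shows "Wf t B p < Wf t B p'"
  using cnt_mono[OF assms] assms unfolding Wf_def by simp

lemma W_inj: "inj_on (Wf t B) {0..<s*t}"
proof (rule inj_onI)
  fix p p' assume p: "p \<in> {0..<s*t}" and p': "p' \<in> {0..<s*t}" and e: "Wf t B p = Wf t B p'"
  have "B p = B p'" using blk_W[of p] blk_W[of p'] p p' e by auto
  then show "p = p'" using W_mono[of p p'] W_mono[of p' p] e
    by (metis less_irrefl nat_neq_iff)
qed

lemma W_image: "Wf t B ` {0..<s*t} = {1..s*t}"
proof (rule card_subset_eq)
  show "finite {1..s*t}" by simp
  show "Wf t B ` {0..<s*t} \<subseteq> {1..s*t}" using W_range by auto
  show "card (Wf t B ` {0..<s*t}) = card {1..s*t}"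
    using card_image[OF W_inj] by simp
qed

end


lemma blk_mono: "u \<le> v \<Longrightarrow> blk t u \<le> blk t v"
  unfolding blk_def by (simp add: div_le_mono)

lemma blk_label: assumes "t \<ge> 1" "1 \<le> j" "j \<le> t" shows "blk t ((i - 1) * t + j) = i - 1 + 1"
proof -
  have e: "(i - 1) * t + j - 1 = (j - 1) + (i - 1) * t" using assms by simp
  have e2: "((j - 1) + (i - 1) * t) div t = (i - 1) + (j - 1) div t"
    by (rule div_mult_self1) (use assms in simp)
  have e3: "(j - 1) div t = 0" using assms by simp
  have "((i - 1) * t + j - 1) div t = i - 1" by (simp only: e e2 e3)
  then show ?thesis unfolding blk_def by simp
qed

context blockfun
begin

definition pos where "pos = inv_into {0..<s*t} (Wf t B)"

lemma pos_W: "a < s*t \<Longrightarrow> pos (Wf t B a) = a"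
  unfolding pos_def using W_inj by (simp add: inv_into_f_f)

lemma pos_range: "u \<in> {1..s*t} \<Longrightarrow> pos u < s*t \<and> Wf t B (pos u) = u"
proof -
  assume u: "u \<in> {1..s*t}"
  then have "u \<in> Wf t B ` {0..<s*t}" using W_image by simp
  then show ?thesis unfolding pos_def
    by (metis atLeastLessThan_iff f_inv_into_f inv_into_into)
qed

lemma cnt0_first:
  assumes "a < s*t" "cntb B a = 0" "a' < a"
  shows "B a' \<noteq> B a"
proof
  assume "B a' = B a"
  then have "a' \<in> {q. q < a \<and> B q = B a}" using assms by simp
  moreover have "finite {q. q < a \<and> B q = B a}" by simp
  ultimately have "card {q. q < a \<and> B q = B a} > 0" by (metis card_gt_0_iff empty_iff)
  then show False using assms unfolding cntb_def by simp
qed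

lemma covers_pos:
  assumes hS: "\<And>i b. 1 \<le> i \<Longrightarrow> i < s \<Longrightarrow> b < s*t \<Longrightarrow> B b = i + 1 \<Longrightarrow> \<exists>a<b. B a = i"
  and uv: "(u, v) \<in> comb_covers s t"
  shows "u \<in> {1..s*t} \<and> v \<in> {1..s*t} \<and> pos u < pos v"
  using uv unfolding comb_covers_def
proof (elim UnE CollectE exE conjE)
  fix i assume e: "(u, v) = (comb_label t i 1, comb_label t (i + 1) 1)" and i: "1 \<le> i" "i \<le> s - 1"
  have u: "u = (i - 1) * t + 1" and v: "v = (i + 1 - 1) * t + 1" using e unfolding comb_label_def by auto
  have s2: "i + 1 \<le> s" using i by linarith
  have "(i + 1) * t \<le> s * t" using s2 by (rule mult_le_mono1)
  then have vle: "i * t + 1 \<le> s * t" using t_pos by (simp add: algebra_simps)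
  have ule: "(i - 1) * t \<le> i * t" by simp
  have "u \<le> s*t" using u vle ule by linarith
  then have uin: "u \<in> {1..s*t}" using u by simp
  have vin: "v \<in> {1..s*t}" using v vle by auto
  define a where "a = pos u"
  define b where "b = pos v"
  have a: "a < s*t" "Wf t B a = u" using pos_range[OF uin] a_def by auto
  have b: "b < s*t" "Wf t B b = v" using pos_range[OF vin] b_def by auto
  have Ba: "B a = i" using blk_W[OF a(1)] a(2) blk_label[OF t_pos, of 1 i] u t_pos i by simp
  have Bb: "B b = i + 1" using blk_W[OF b(1)] b(2) blk_label[OF t_pos, of 1 "i+1"] v t_pos by simp
  have "(B a - 1) * t + cntb B a + 1 = (i - 1) * t + 1" using a(2) u unfolding Wf_def by simp
  then have ca: "cntb B a = 0" using Ba by simp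
  have "i < s" using i by linarith
  obtain a' where a': "a' < b" "B a' = i" using hS[of i b] \<open>i < s\<close> i b Bb by auto
  have "a \<le> a'"
  proof (rule ccontr)
    assume "\<not> a \<le> a'"
    then have "B a' \<noteq> B a" using cnt0_first[OF a(1) ca] by simp
    then show False using a' Ba by simp
  qed
  then show ?thesis using uin vin a' a_def b_def by simp
next
  fix i j assume e: "(u, v) = (comb_label t i j, comb_label t i (j + 1))"
    and ij: "1 \<le> i" "i \<le> s" "1 \<le> j" "j \<le> t - 1"
  have u: "u = (i - 1) * t + j" and v: "v = (i - 1) * t + (j + 1)" using e unfolding comb_label_def by auto
  have "i * t \<le> s * t" using ij by simp
  moreover have "(i - 1) * t + t = i * t" using ij by (cases i) auto
  moreover have "j + 1 \<le> t" using ij t_pos by linarith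
  ultimately have vle: "(i - 1) * t + (j + 1) \<le> s * t" by linarith
  have uin: "u \<in> {1..s*t}" using u vle ij by auto
  have vin: "v \<in> {1..s*t}" using v vle by auto
  define a where "a = pos u"
  define b where "b = pos v"
  have a: "a < s*t" "Wf t B a = u" using pos_range[OF uin] a_def by auto
  have b: "b < s*t" "Wf t B b = v" using pos_range[OF vin] b_def by auto
  have Ba: "B a = i" using blk_W[OF a(1)] a(2) blk_label[OF t_pos, of j i] u t_pos ij by simp
  have Bb: "B b = i" using blk_W[OF b(1)] b(2) blk_label[OF t_pos, of "j+1" i] v t_pos ij by simp
  have "a < b"
  proof (rule ccontr)
    assume "\<not> a < b"
    then have "b < a \<or> b = a" by auto
    then show False
    proof
      assume "b < a" then have "Wf t B b < Wf t B a" using W_mono Ba Bb by simp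
      then show False using a b u v by simp
    next
      assume "b = a" then show False using a b u v by simp
    qed
  qed
  then show ?thesis using uin vin a_def b_def by simp
qed

lemma word_LE:
  assumes hS: "\<And>i b. 1 \<le> i \<Longrightarrow> i < s \<Longrightarrow> b < s*t \<Longrightarrow> B b = i + 1 \<Longrightarrow> \<exists>a<b. B a = i"
  shows "map (Wf t B) [0..<s*t] \<in> linear_extensions s t"
proof -
  let ?w = "map (Wf t B) [0..<s*t]"
  define R where "R = {(u,v). u \<in> {1..s*t} \<and> v \<in> {1..s*t} \<and> pos u < pos v}"
  have "trans R" unfolding R_def trans_def by auto
  have "comb_covers s t \<subseteq> R" unfolding R_def using covers_pos[OF hS] by auto
  then have "comb_less s t \<subseteq> R" unfolding comb_less_def
    using trancl_mono trancl_id[OF \<open>trans R\<close>] by blast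
  then have ord: "\<And>a b. a < s*t \<Longrightarrow> b < s*t \<Longrightarrow> (Wf t B a, Wf t B b) \<in> comb_less s t \<Longrightarrow> a < b"
    unfolding R_def using pos_W by auto
  have d: "distinct ?w" using W_inj by (simp add: distinct_map)
  have st: "set ?w = {1..s*t}" using W_image by simp
  show ?thesis unfolding linear_extensions_def using d st ord by auto
qed

lemma word_no321:
  assumes h: "\<And>a b c. a < b \<Longrightarrow> b < c \<Longrightarrow> c < s*t \<Longrightarrow> \<not> (B a > B b \<and> B b > B c)"
  shows "\<not> contains_321 (map (Wf t B) [0..<s*t])"
proof
  assume "contains_321 (map (Wf t B) [0..<s*t])"
  then obtain a b c where abc: "a < b" "b < c" "c < s*t" "Wf t B a > Wf t B b" "Wf t B b > Wf t B c"
    unfolding contains_321_def by auto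
  have gt: "B x > B y" if "x < y" "y < s*t" "Wf t B x > Wf t B y" for x y
  proof -
    have "blk t (Wf t B y) \<le> blk t (Wf t B x)" using blk_mono that by simp
    then have "B y \<le> B x" using blk_W that by simp
    moreover have "B x \<noteq> B y" using W_mono[of x y] that by auto
    ultimately show ?thesis by simp
  qed
  have "B a > B b" "B b > B c" using gt abc by auto
  then show False using h abc by blast
qed

end


lemma LE_basic:
  assumes "w \<in> linear_extensions s t"
  shows "distinct w" "set w = {1..s*t}" "length w = s*t"
    "\<And>a b. a < length w \<Longrightarrow> b < length w \<Longrightarrow> (w ! a, w ! b) \<in> comb_less s t \<Longrightarrow> a < b"
proof -
  show d: "distinct w" and st: "set w = {1..s*t}" using assms unfolding linear_extensions_def by auto
  show "length w = s*t" using distinct_card[OF d] st by simp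
  show "\<And>a b. a < length w \<Longrightarrow> b < length w \<Longrightarrow> (w ! a, w ! b) \<in> comb_less s t \<Longrightarrow> a < b"
    using assms unfolding linear_extensions_def by auto
qed

lemma cover_step:
  assumes t: "t \<ge> 1" and u: "1 \<le> u" "u + 1 \<le> s * t" and b: "blk t u = blk t (u + 1)"
  shows "(u, u + 1) \<in> comb_covers s t"
proof -
  define q where "q = (u - 1) div t"
  define r where "r = (u - 1) mod t"
  have ueq: "u = q * t + r + 1" using u unfolding q_def r_def by simp
  have rlt: "r < t" using t unfolding r_def by simp
  have bq: "blk t u = q + 1" unfolding blk_def q_def by simp
  have "r \<noteq> t - 1"
  proof
    assume "r = t - 1"
    then have "u + 1 - 1 = (q + 1) * t" using ueq t by (simp add: algebra_simps)
    then have "blk t (u + 1) = q + 2" unfolding blk_def using t by simp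
    then show False using b bq by simp
  qed
  then have r2: "r + 1 \<le> t - 1" using rlt by linarith
  have "u \<le> s * t - 1" using u by linarith
  then have "(u - 1) div t \<le> (s * t - 1) div t" by (simp add: div_le_mono)
  moreover have "(s * t - 1) div t < s" using t
    by (metis One_nat_def diff_less div_less_iff_less_mult less_one u(2) add_leE less_le_trans)
  ultimately have qs: "q + 1 \<le> s" unfolding q_def by linarith
  have "\<exists>i j. (u, u + 1) = (comb_label t i j, comb_label t i (j + 1)) \<and> 1 \<le> i \<and> i \<le> s \<and> 1 \<le> j \<and> j \<le> t - 1"
    unfolding comb_label_def using ueq qs r2 by (intro exI[of _ "q+1"] exI[of _ "r+1"]) simp
  then show ?thesis unfolding comb_covers_def by blast
qed

lemma same_block_less:
  assumes t: "t \<ge> 1" and "1 \<le> u"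
  shows "u < v \<Longrightarrow> blk t u = blk t v \<Longrightarrow> v \<le> s * t \<Longrightarrow> (u, v) \<in> comb_less s t"
proof (induction v)
  case 0 then show ?case by simp
next
  case (Suc v)
  show ?case
  proof (cases "u = v")
    case True
    then have "(u, Suc v) \<in> comb_covers s t" using cover_step[OF t \<open>1 \<le> u\<close>, of s] Suc.prems by simp
    then show ?thesis unfolding comb_less_def by blast
  next
    case False
    then have uv: "u < v" using Suc.prems by simp
    have "blk t u \<le> blk t v" "blk t v \<le> blk t (Suc v)" using uv by (simp_all add: blk_mono)
    then have bv: "blk t v = blk t u" using Suc.prems by simp
    have "(u, v) \<in> comb_less s t" using Suc.IH uv bv Suc.prems by simp
    moreover have "(v, Suc v) \<in> comb_covers s t" using cover_step[OF t, of v s] uv \<open>1 \<le> u\<close> Suc.prems bv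
      by simp
    ultimately show ?thesis unfolding comb_less_def by (simp add: trancl_into_trancl)
  qed
qed

lemma LE_formula:
  assumes w: "w \<in> linear_extensions s t" and t: "t \<ge> 1" and p: "p < s * t"
  shows "w ! p = Wf t (\<lambda>q. blk t (w ! q)) p"
proof -
  define B where "B = (\<lambda>q. blk t (w ! q))"
  note L = LE_basic[OF w]
  have inr: "\<And>a. a < s*t \<Longrightarrow> w ! a \<in> {1..s*t}" using L(2,3) nth_mem by (metis)
  have ord: "w ! a < w ! b" if "a < b" "b < s*t" "B a = B b" for a b
  proof (rule ccontr)
    assume "\<not> w ! a < w ! b"
    moreover have "w ! a \<noteq> w ! b" using L(1) L(3) that nth_eq_iff_index_eq by fastforce
    ultimately have lt: "w ! b < w ! a" by simp
    have "(w ! b, w ! a) \<in> comb_less s t"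
      using same_block_less[OF t, of "w ! b" "w ! a" s] lt inr[of a] inr[of b] that unfolding B_def by auto
    then have "b < a" using L(4) L(3) that by simp
    then show False using that by simp
  qed
  define k where "k = B p"
  define lo where "lo = (k - 1) * t"
  define Q where "Q = {q. q < p \<and> B q = k}"
  have wp: "w ! p \<in> {1..s*t}" using inr p by simp
  have kdef: "(w ! p - 1) div t = k - 1" "k \<ge> 1" unfolding k_def B_def blk_def by simp_all
  have lo_le: "lo \<le> w ! p - 1" unfolding lo_def using kdef(1)
    by (metis div_times_less_eq_dividend)
  have bij: "bij_betw (nth w) Q {lo<..<w ! p}"
  proof (rule bij_betw_imageI)
    show "inj_on (nth w) Q" unfolding Q_def using L(1) L(3) p
      by (intro inj_onI) (simp add: nth_eq_iff_index_eq)
    show "nth w ` Q = {lo<..<w ! p}"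
    proof
      show "nth w ` Q \<subseteq> {lo<..<w ! p}"
      proof
        fix v assume "v \<in> nth w ` Q"
        then obtain q where q: "q < p" "B q = k" "v = w ! q" unfolding Q_def by auto
        have "v < w ! p" using ord[of q p] q p k_def by simp
        moreover have "(v - 1) div t = k - 1" using q unfolding B_def blk_def by simp
        then have "lo \<le> v - 1" unfolding lo_def by (metis div_times_less_eq_dividend)
        moreover have "v \<ge> 1" using inr[of q] q p by simp
        ultimately show "v \<in> {lo<..<w ! p}" by simp
      qed
    next
      show "{lo<..<w ! p} \<subseteq> nth w ` Q"
      proof
        fix v assume v: "v \<in> {lo<..<w ! p}"
        then have "v \<in> {1..s*t}" using wp by auto
        then obtain q where q: "q < s*t" "w ! q = v" using L(2,3) by (metis in_set_conv_nth)
        have "(v - 1) div t \<le> (w ! p - 1) div t" using v by (intro div_le_mono) auto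
        moreover have "((k - 1) * t) div t \<le> (v - 1) div t" using v unfolding lo_def
          by (intro div_le_mono) auto
        ultimately have "(v - 1) div t = k - 1" using kdef t by simp
        then have Bq: "B q = k" unfolding B_def blk_def using q kdef by simp
        have "q < p"
        proof (rule ccontr)
          assume "\<not> q < p"
          then have "p < q \<or> p = q" by auto
          then show False
          proof
            assume "p < q" then have "w ! p < w ! q" using ord[of p q] q Bq k_def by simp
            then show False using v q by simp
          next
            assume "p = q" then show False using v q by simp
          qed
        qed
        then show "v \<in> nth w ` Q" unfolding Q_def using q Bq by auto
      qed
    qed
  qed
  have "card Q = w ! p - Suc lo" using bij_betw_same_card[OF bij] by simp
  then have "w ! p = lo + card Q + 1" using lo_le wp by auto
  then show ?thesis unfolding Wf_def cntb_def lo_def Q_def k_def B_def by simp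
qed

lemma LE_no321:
  assumes w: "w \<in> linear_extensions s t" and n3: "\<not> contains_321 w"
    and abc: "a < b" "b < c" "c < s * t"
  shows "\<not> (blk t (w ! a) > blk t (w ! b) \<and> blk t (w ! b) > blk t (w ! c))"
proof
  assume h: "blk t (w ! a) > blk t (w ! b) \<and> blk t (w ! b) > blk t (w ! c)"
  have "w ! a > w ! b" using h blk_mono[of "w ! a" "w ! b" t] by (metis not_le)
  moreover have "w ! b > w ! c" using h blk_mono[of "w ! b" "w ! c" t] by (metis not_le)
  ultimately have "contains_321 w" unfolding contains_321_def using abc LE_basic(3)[OF w] by auto
  then show False using n3 by simp
qed



definition blue :: "(nat \<Rightarrow> nat) \<Rightarrow> nat \<Rightarrow> bool" where "blue B p \<longleftrightarrow> (\<forall>q<p. B q \<le> B p)"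

definition enc :: "nat \<Rightarrow> nat \<Rightarrow> (nat \<Rightarrow> nat) \<Rightarrow> nat set \<times> (nat \<Rightarrow> nat) \<times> (nat \<Rightarrow> nat)" where
 "enc n s B = ({p. p < n \<and> blue B p},
   restrict (\<lambda>k. card {p. p < n \<and> blue B p \<and> B p = k}) {1..s},
   restrict (\<lambda>k. card {p. p < n \<and> \<not> blue B p \<and> B p = k}) {1..s})"

lemma core:
  fixes p n :: nat and X Y :: "nat \<Rightarrow> nat"
  assumes agree: "\<And>q. q < p \<Longrightarrow> X q = Y q" and p: "p < n" "C p" and lt: "X p < Y p"
  and mono2: "\<And>q q'. q < q' \<Longrightarrow> q' < n \<Longrightarrow> C q \<Longrightarrow> C q' \<Longrightarrow> Y q \<le> Y q'"
  shows "card {q. q < n \<and> C q \<and> Y q = X p} < card {q. q < n \<and> C q \<and> X q = X p}"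
proof -
  let ?X = "{q. q < p \<and> C q \<and> X q = X p}"
  have sub: "{q. q < n \<and> C q \<and> Y q = X p} \<subseteq> ?X"
  proof
    fix q assume q: "q \<in> {q. q < n \<and> C q \<and> Y q = X p}"
    have "q < p"
    proof (rule ccontr)
      assume "\<not> q < p"
      then have "p \<le> q" by simp
      then have "Y p \<le> Y q"
      proof (cases "p = q")
        case False
        then show ?thesis using mono2[of p q] q p \<open>p \<le> q\<close> by auto
      qed simp
      then show False using q lt by simp
    qed
    then show "q \<in> ?X" using q agree by auto
  qed
  have "card {q. q < n \<and> C q \<and> Y q = X p} \<le> card ?X" by (rule card_mono[OF _ sub]) simp
  also have "card ?X < card {q. q < n \<and> C q \<and> X q = X p}"
    by (rule psubset_card_mono) (use p in auto)
  finally show ?thesis .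
qed

definition no321 :: "nat \<Rightarrow> (nat \<Rightarrow> nat) \<Rightarrow> bool" where
  "no321 n B \<longleftrightarrow> (\<forall>a b c. a < b \<longrightarrow> b < c \<longrightarrow> c < n \<longrightarrow> \<not> (B a > B b \<and> B b > B c))"

lemma half:
  assumes agree: "\<And>q. q < p \<Longrightarrow> B1 q = B2 q" and p: "p < n" and lt: "B1 p < B2 p"
  and r: "B1 p \<in> {1..s}" and e: "enc n s B1 = enc n s B2" and n3: "no321 n B2"
  shows False
proof -
  have P: "{p. p < n \<and> blue B1 p} = {p. p < n \<and> blue B2 p}" using e unfolding enc_def by simp
  then have bl: "\<And>q. q < n \<Longrightarrow> blue B1 q = blue B2 q" by blast
  have c1: "card {q. q < n \<and> blue B1 q \<and> B1 q = B1 p} = card {q. q < n \<and> blue B2 q \<and> B2 q = B1 p}"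
  proof -
    have "fst (snd (enc n s B1)) (B1 p) = fst (snd (enc n s B2)) (B1 p)" using e by simp
    then show ?thesis using r unfolding enc_def by simp
  qed
  have c2: "card {q. q < n \<and> \<not> blue B1 q \<and> B1 q = B1 p} = card {q. q < n \<and> \<not> blue B2 q \<and> B2 q = B1 p}"
  proof -
    have "snd (snd (enc n s B1)) (B1 p) = snd (snd (enc n s B2)) (B1 p)" using e by simp
    then show ?thesis using r unfolding enc_def by simp
  qed
  show False
  proof (cases "blue B1 p")
    case True
    have "card {q. q < n \<and> blue B1 q \<and> B2 q = B1 p} < card {q. q < n \<and> blue B1 q \<and> B1 q = B1 p}"
    proof (rule core[where C="\<lambda>q. blue B1 q" and X=B1 and Y=B2 and p=p and n=n, OF agree p True lt])
      fix q q' assume "q < q'" "q' < n" "blue B1 q" "blue B1 q'"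
      then have "blue B2 q'" using bl by simp
      then show "B2 q \<le> B2 q'" using \<open>q < q'\<close> unfolding blue_def by simp
    qed
    moreover have "{q. q < n \<and> blue B1 q \<and> B2 q = B1 p} = {q. q < n \<and> blue B2 q \<and> B2 q = B1 p}"
      using bl by auto
    ultimately show False using c1 by simp
  next
    case False
    have "card {q. q < n \<and> \<not> blue B1 q \<and> B2 q = B1 p} < card {q. q < n \<and> \<not> blue B1 q \<and> B1 q = B1 p}"
    proof (rule core[where C="\<lambda>q. \<not> blue B1 q" and X=B1 and Y=B2 and p=p and n=n, OF agree p False lt])
      fix q q' assume qq: "q < q'" "q' < n" "\<not> blue B1 q" "\<not> blue B1 q'"
      then have "\<not> blue B2 q" using bl by simp
      then obtain r where r: "r < q" "\<not> B2 r \<le> B2 q" unfolding blue_def by blast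
      show "B2 q \<le> B2 q'"
      proof (rule ccontr)
        assume a: "\<not> B2 q \<le> B2 q'"
        have "\<not> (B2 r > B2 q \<and> B2 q > B2 q')"
          using n3 r(1) qq(1,2) unfolding no321_def by blast
        then show False using a r(2) by simp
      qed
    qed
    moreover have "{q. q < n \<and> \<not> blue B1 q \<and> B2 q = B1 p} = {q. q < n \<and> \<not> blue B2 q \<and> B2 q = B1 p}"
      using bl by auto
    ultimately show False using c2 by simp
  qed
qed

lemma enc_inj:
  assumes e: "enc n s B1 = enc n s B2" and n1: "no321 n B1" and n2: "no321 n B2"
  and r1: "\<And>p. p < n \<Longrightarrow> B1 p \<in> {1..s}" and r2: "\<And>p. p < n \<Longrightarrow> B2 p \<in> {1..s}"
  shows "\<forall>p<n. B1 p = B2 p"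
proof (rule ccontr)
  assume "\<not> (\<forall>p<n. B1 p = B2 p)"
  then have ex: "\<exists>p. p < n \<and> B1 p \<noteq> B2 p" by auto
  define p where "p = (LEAST p. p < n \<and> B1 p \<noteq> B2 p)"
  have p: "p < n" "B1 p \<noteq> B2 p" using LeastI_ex[OF ex] unfolding p_def by auto
  have agree: "B1 q = B2 q" if q: "q < p" for q
  proof -
    have "\<not> (q < n \<and> B1 q \<noteq> B2 q)" using not_less_Least[of q "\<lambda>p. p < n \<and> B1 p \<noteq> B2 p"] q
      unfolding p_def by blast
    then show ?thesis using q p(1) by simp
  qed
  show False
  proof (cases "B1 p < B2 p")
    case True then show False using half[OF agree p(1) True r1[OF p(1)] e n2] by simp
  next
    case False
    then have "B2 p < B1 p" using p by simp
    then show False using half[of p B2 B1 n s, OF _ p(1) _ r2[OF p(1)] e[symmetric] n1] agree by simp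
  qed
qed

lemma blk_range: assumes "t \<ge> 1" "v \<in> {1..s*t}" shows "blk t v \<in> {1..s}"
proof -
  have "v - 1 < s * t" using assms by auto
  then have "(v - 1) div t < s" by (simp add: less_mult_imp_div_less)
  then show ?thesis unfolding blk_def by simp
qed

theorem upper_bound:
  assumes t: "t \<ge> 1"
  shows "A321_comb s t \<le> 2 ^ (s*t) * (s*t+1)^s * (s*t+1)^s"
proof -
  let ?n = "s*t"
  let ?A = "{w \<in> linear_extensions s t. \<not> contains_321 w}"
  define F where "F = (\<lambda>w. enc ?n s (\<lambda>q. blk t (w ! q)))"
  let ?T = "Pow {0..<?n} \<times> (PiE {1..s} (\<lambda>_. {0..?n})) \<times> (PiE {1..s} (\<lambda>_. {0..?n}))"
  have inrng: "\<And>w p. w \<in> ?A \<Longrightarrow> p < ?n \<Longrightarrow> blk t (w ! p) \<in> {1..s}"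
  proof -
    fix w p assume w: "w \<in> ?A" and p: "p < ?n"
    have "w ! p \<in> {1..?n}" using LE_basic(2,3)[of w s t] w p by (metis CollectD nth_mem)
    then show "blk t (w ! p) \<in> {1..s}" using blk_range[OF t, of "w ! p" s] by simp
  qed
  have nn: "\<And>w. w \<in> ?A \<Longrightarrow> no321 ?n (\<lambda>q. blk t (w ! q))"
    unfolding no321_def using LE_no321 by blast
  have inj: "inj_on F ?A"
  proof (rule inj_onI)
    fix w1 w2 assume w1: "w1 \<in> ?A" and w2: "w2 \<in> ?A" and e: "F w1 = F w2"
    have ag: "\<forall>p<?n. blk t (w1 ! p) = blk t (w2 ! p)"
      using enc_inj[OF e[unfolded F_def] nn[OF w1] nn[OF w2]] inrng w1 w2 by blast
    show "w1 = w2"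
    proof (rule nth_equalityI)
      show "length w1 = length w2" using LE_basic(3)[of w1 s t] LE_basic(3)[of w2 s t] w1 w2 by simp
      fix p assume "p < length w1"
      then have p: "p < ?n" using LE_basic(3)[of w1 s t] w1 by simp
      have "w1 ! p = Wf t (\<lambda>q. blk t (w1 ! q)) p" using LE_formula[of w1 s t p] w1 t p by simp
      also have "\<dots> = Wf t (\<lambda>q. blk t (w2 ! q)) p"
      proof -
        have "{q. q < p \<and> blk t (w1 ! q) = blk t (w1 ! p)} = {q. q < p \<and> blk t (w2 ! q) = blk t (w2 ! p)}"
          using ag p by auto
        then show ?thesis unfolding Wf_def cntb_def using ag p by simp
      qed
      also have "\<dots> = w2 ! p" using LE_formula[of w2 s t p] w2 t p by simp
      finally show "w1 ! p = w2 ! p" .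
    qed
  qed
  have sub: "F ` ?A \<subseteq> ?T"
  proof
    fix x assume "x \<in> F ` ?A"
    then obtain w where x: "x = F w" by auto
    have "\<And>P. card {p. p < ?n \<and> P p} \<le> ?n"
    proof -
      fix P :: "nat \<Rightarrow> bool"
      have "card {p. p < ?n \<and> P p} \<le> card {0..<?n}" by (intro card_mono) auto
      then show "card {p. p < ?n \<and> P p} \<le> ?n" by simp
    qed
    then show "x \<in> ?T" unfolding x F_def enc_def
      by (simp add: restrict_PiE_iff subset_eq)
  qed
  have "card ?A \<le> card ?T" by (rule card_inj_on_le[OF inj sub]) (intro finite_cartesian_product finite_PiE; simp)
  also have "card ?T = 2 ^ ?n * (?n+1)^s * (?n+1)^s"
    by (simp add: card_cartesian_product card_Pow card_PiE)
  finally show ?thesis unfolding A321_comb_def .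
qed



definition xL :: "nat \<Rightarrow> nat \<Rightarrow> nat" where "xL s c = min (c + 2) s"
definition yL :: "nat \<Rightarrow> nat" where "yL c = max c 1"
definition aL :: "nat \<Rightarrow> nat \<Rightarrow> nat" where "aL t c = (if even c then t div 2 else t - t div 2)"
definition Dset :: "nat \<Rightarrow> nat \<Rightarrow> nat set" where "Dset t c = (if c = 0 then {1..<t} else {0..<t})"
definition Bf :: "nat \<Rightarrow> nat \<Rightarrow> (nat \<Rightarrow> nat set) \<Rightarrow> nat \<Rightarrow> nat" where
  "Bf s t S p = (if p mod t \<in> S (p div t) then xL s (p div t) else yL (p div t))"
definition Params :: "nat \<Rightarrow> nat \<Rightarrow> (nat \<Rightarrow> nat set) set" where
  "Params s t = PiE {0..<s} (\<lambda>c. {A. A \<subseteq> Dset t c \<and> card A = aL t c})"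

lemma xy_ne: "s \<ge> 2 \<Longrightarrow> c < s \<Longrightarrow> xL s c \<noteq> yL c" unfolding xL_def yL_def by auto

lemma aL_le: "aL t c \<le> t" unfolding aL_def by auto

lemma chunk_count:
  assumes S: "S c \<subseteq> {0..<t}" "card (S c) = aL t c" and c: "c < s" and s2: "s \<ge> 2"
  shows "card {j. j < t \<and> (if j \<in> S c then xL s c else yL c) = k}
         = (if xL s c = k then aL t c else 0) + (if yL c = k then t - aL t c else 0)"
proof -
  have fin: "finite (S c)" using S(1) finite_subset by blast
  have e: "{j. j < t \<and> (if j \<in> S c then xL s c else yL c) = k} =
       (if xL s c = k then S c else {}) \<union> (if yL c = k then {0..<t} - S c else {})"
    using S xy_ne[OF s2 c] by auto
  have "card ((if xL s c = k then S c else {}) \<union> (if yL c = k then {0..<t} - S c else {}))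
      = card (if xL s c = k then S c else {}) + card (if yL c = k then {0..<t} - S c else {})"
    by (rule card_Un_disjoint) (use xy_ne[OF s2 c] fin in auto)
  moreover have "card ({0..<t} - S c) = t - aL t c" using S fin by (simp add: card_Diff_subset)
  ultimately show ?thesis using S e by simp
qed

lemma sum_g:
  assumes s: "s \<ge> 2" and k: "1 \<le> k" "k \<le> s"
  shows "(\<Sum>c<s. (if xL s c = k then aL t c else 0) + (if yL c = k then t - aL t c else 0)) = t"
proof -
  have 1: "(\<Sum>c<s. (if xL s c = k then aL t c else 0)) = sum (aL t) {c \<in> {..<s}. xL s c = k}"
    by (rule sum.inter_filter[symmetric]) simp
  have 2: "(\<Sum>c<s. (if yL c = k then t - aL t c else 0)) = sum (\<lambda>c. t - aL t c) {c \<in> {..<s}. yL c = k}"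
    by (rule sum.inter_filter[symmetric]) simp
  have h: "t div 2 \<le> t" by simp
  have split: "(\<Sum>c<s. (if xL s c = k then aL t c else 0) + (if yL c = k then t - aL t c else 0))
     = sum (aL t) {c \<in> {..<s}. xL s c = k} + sum (\<lambda>c. t - aL t c) {c \<in> {..<s}. yL c = k}"
    by (simp only: sum.distrib 1 2)
  consider "k = 1" | "2 \<le> k" "k < s" | "k = s" "k \<noteq> 1" using k by linarith
  then show ?thesis
  proof cases
    case 1
    have X: "{c \<in> {..<s}. xL s c = k} = {}" using 1 s unfolding xL_def by auto
    have Y: "{c \<in> {..<s}. yL c = k} = {0,1}" using 1 s unfolding yL_def by auto
    show ?thesis unfolding split X Y using h by (simp add: aL_def)
  next
    case 2
    have X: "{c \<in> {..<s}. xL s c = k} = {k - 2}" using 2 s unfolding xL_def by auto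
    have Y: "{c \<in> {..<s}. yL c = k} = {k}" using 2 s unfolding yL_def by auto
    have "aL t (k - 2) = aL t k" using 2 unfolding aL_def
      by (metis add_2_eq_Suc' diff_add even_Suc_Suc_iff le_add_diff_inverse2)
    then show ?thesis unfolding split X Y using aL_le[of t k] by simp
  next
    case 3
    have X: "{c \<in> {..<s}. xL s c = k} = {s - 2, s - 1}" using 3 s unfolding xL_def by auto
    have Y: "{c \<in> {..<s}. yL c = k} = {}" using 3 s unfolding yL_def by auto
    have ne: "s - 2 \<noteq> s - 1" using s by simp
    have sc: "s - 1 = Suc (s - 2)" using s by simp
    have "aL t (s - 2) + aL t (s - 1) = t" unfolding aL_def sc using h by auto
    then show ?thesis unfolding split X Y using ne by simp
  qed
qed

lemma Bf_count:
  assumes s: "s \<ge> 2" and t: "t \<ge> 1" and S: "S \<in> Params s t" and k: "1 \<le> k" "k \<le> s"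
  shows "card {p. p < s * t \<and> Bf s t S p = k} = t"
proof -
  let ?L = "\<lambda>c j. (if j \<in> S c then xL s c else yL c)"
  let ?Sig = "SIGMA c:{..<s}. {j. j < t \<and> ?L c j = k}"
  have bij: "bij_betw (\<lambda>(c, j). c * t + j) ?Sig {p. p < s * t \<and> Bf s t S p = k}"
  proof (rule bij_betw_imageI)
    show "inj_on (\<lambda>(c, j). c * t + j) ?Sig"
    proof (rule inj_onI, clarsimp)
      fix c j c' j' assume "j < t" "j' < t" "c * t + j = c' * t + j'"
      then show "c = c' \<and> j = j'"
        by (metis add.commute div_mult_self1 div_less mod_mult_self1 mod_less not_less0 plus_nat.add_0 t
            le_less_trans zero_less_one less_irrefl_nat gr_zeroI)
    qed
    show "(\<lambda>(c, j). c * t + j) ` ?Sig = {p. p < s * t \<and> Bf s t S p = k}"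
    proof
      show "(\<lambda>(c, j). c * t + j) ` ?Sig \<subseteq> {p. p < s * t \<and> Bf s t S p = k}"
      proof
        fix x assume "x \<in> (\<lambda>(c, j). c * t + j) ` ?Sig"
        then obtain c j where x: "x = c * t + j" and c: "c < s" and j: "j < t" and L: "?L c j = k" by auto
        have "c * t + j < s * t"
        proof -
          have "(c + 1) * t \<le> s * t" using c by (intro mult_le_mono1) simp
          then show ?thesis using j by simp
        qed
        moreover have d: "(c * t + j) div t = c" "(c * t + j) mod t = j" using j t by simp_all
        moreover have "Bf s t S (c * t + j) = k" unfolding Bf_def d using L by simp
        ultimately show "x \<in> {p. p < s * t \<and> Bf s t S p = k}" using x by simp
      qed
    next
      show "{p. p < s * t \<and> Bf s t S p = k} \<subseteq> (\<lambda>(c, j). c * t + j) ` ?Sig"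
      proof
        fix p assume "p \<in> {p. p < s * t \<and> Bf s t S p = k}"
        then have p: "p < s * t" and B: "Bf s t S p = k" by auto
        have "p div t < s" using p by (simp add: less_mult_imp_div_less)
        moreover have "p mod t < t" using t by simp
        moreover have "p = (p div t) * t + p mod t" by simp
        ultimately show "p \<in> (\<lambda>(c, j). c * t + j) ` ?Sig" using B unfolding Bf_def
          by (intro image_eqI[of _ _ "(p div t, p mod t)"]) auto
      qed
    qed
  qed
  have "card {p. p < s * t \<and> Bf s t S p = k} = card ?Sig" using bij_betw_same_card[OF bij] by simp
  also have "\<dots> = (\<Sum>c<s. card {j. j < t \<and> ?L c j = k})" by (rule card_SigmaI) auto
  also have "\<dots> = (\<Sum>c<s. (if xL s c = k then aL t c else 0) + (if yL c = k then t - aL t c else 0))"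
  proof (rule sum.cong[OF refl])
    fix c assume c: "c \<in> {..<s}"
    have "S c \<in> {A. A \<subseteq> Dset t c \<and> card A = aL t c}" using S c unfolding Params_def by auto
    then have "S c \<subseteq> {0..<t}" "card (S c) = aL t c" unfolding Dset_def by (auto split: if_splits)
    then show "card {j. j < t \<and> ?L c j = k}
         = (if xL s c = k then aL t c else 0) + (if yL c = k then t - aL t c else 0)"
      using chunk_count[of S c t s k] c s by simp
  qed
  also have "\<dots> = t" by (rule sum_g[OF s k])
  finally show ?thesis .
qed



lemma Bf_range:
  assumes s: "s \<ge> 2" and t: "t \<ge> 1" and p: "p < s * t"
  shows "1 \<le> Bf s t S p \<and> Bf s t S p \<le> s"
proof -
  have "p div t < s" using p by (simp add: less_mult_imp_div_less)
  then show ?thesis using s unfolding Bf_def xL_def yL_def by auto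
qed

lemma Bf_blockfun:
  assumes s: "s \<ge> 2" and t: "t \<ge> 1" and S: "S \<in> Params s t"
  shows "blockfun s t (Bf s t S)"
  by unfold_locales (use t Bf_range[OF s t] Bf_count[OF s t S] in auto)

lemma aL_ge: "t div 2 \<le> aL t c" unfolding aL_def by auto

lemma Params_S:
  assumes "S \<in> Params s t" "c < s"
  shows "S c \<subseteq> Dset t c" "card (S c) = aL t c" "S c \<subseteq> {0..<t}"
proof -
  have "S c \<in> {A. A \<subseteq> Dset t c \<and> card A = aL t c}" using assms unfolding Params_def by auto
  then show "S c \<subseteq> Dset t c" "card (S c) = aL t c" by auto
  moreover have "Dset t c \<subseteq> {0..<t}" unfolding Dset_def by auto
  ultimately show "S c \<subseteq> {0..<t}" by blast
qed

lemma Bf_hS: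
  assumes s: "s \<ge> 2" and t: "t \<ge> 2" and S: "S \<in> Params s t"
    and i: "1 \<le> i" "i < s" and b: "b < s * t" and Bb: "Bf s t S b = i + 1"
  shows "\<exists>a<b. Bf s t S a = i"
proof (cases "i = 1")
  case True
  have "0 \<notin> S 0" using Params_S(1)[OF S, of 0] s unfolding Dset_def by auto
  then have B0: "Bf s t S 0 = 1" unfolding Bf_def yL_def by simp
  have "b \<noteq> 0"
  proof
    assume "b = 0"
    then have "Bf s t S b = 1" using B0 by simp
    then show False using Bb True by simp
  qed
  then have "0 < b" by simp
  then show ?thesis using B0 True by blast
next
  case False
  then have i2: "i \<ge> 2" using i by simp
  define c where "c = b div t"
  have cge: "c \<ge> i - 1"
  proof (cases "b mod t \<in> S c")
    case True
    then have "min (c + 2) s = i + 1" using Bb unfolding Bf_def xL_def c_def by simp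
    then show ?thesis by linarith
  next
    case False
    then have "max c 1 = i + 1" using Bb unfolding Bf_def yL_def c_def by simp
    then show ?thesis by linarith
  qed
  have is2: "i - 2 < s" using i by simp
  have "card (S (i - 2)) \<ge> 1" using Params_S(2)[OF S is2] aL_ge[of t "i - 2"] t by linarith
  then obtain j where j: "j \<in> S (i - 2)" by (metis card.empty ex_in_conv not_one_le_zero)
  have jt: "j < t" using Params_S(3)[OF S is2] j by auto
  define a where "a = (i - 2) * t + j"
  have ad: "a div t = i - 2" "a mod t = j" unfolding a_def using jt by simp_all
  have Ba: "Bf s t S a = i" unfolding Bf_def ad xL_def using j i i2 by simp
  obtain m where m: "i = m + 2" using i2 by (metis add.commute le_Suc_ex)
  have "a < (i - 1) * t" unfolding a_def using jt m by simp
  also have "\<dots> \<le> c * t" using cge by (intro mult_le_mono1)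
  also have "\<dots> \<le> b" unfolding c_def by (rule div_times_less_eq_dividend)
  finally show ?thesis using Ba by auto
qed

lemma Bf_no321:
  assumes s: "s \<ge> 2" and that: "a < b" "b < c"
  shows "\<not> (Bf s t S a > Bf s t S b \<and> Bf s t S b > Bf s t S c)"
proof -
  let ?K = "\<lambda>p. p mod t \<in> S (p div t)"
  have mono: "Bf s t S p \<le> Bf s t S q" if "p \<le> q" "?K p = ?K q" for p q
  proof -
    have d: "p div t \<le> q div t" using that by (simp add: div_le_mono)
    show ?thesis
    proof (cases "?K p")
      case True
      then have "?K q" using that by simp
      then show ?thesis using True d unfolding Bf_def xL_def by simp
    next
      case False
      then have "\<not> ?K q" using that by simp
      then show ?thesis using False d unfolding Bf_def yL_def by simp
    qed
  qed
  show ?thesis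
  proof
    assume h: "Bf s t S a > Bf s t S b \<and> Bf s t S b > Bf s t S c"
    consider "?K a = ?K b" | "?K b = ?K c" | "?K a = ?K c"
      by (cases "?K a"; cases "?K b"; cases "?K c") simp_all
    then show False
    proof cases
      case 1 then show False using mono[of a b] h that by simp
    next
      case 2 then show False using mono[of b c] h that by simp
    next
      case 3 then show False using mono[of a c] h that by simp
    qed
  qed
qed

lemma Params_inj:
  assumes s: "s \<ge> 2" and t: "t \<ge> 1" and S1: "S1 \<in> Params s t" and S2: "S2 \<in> Params s t"
    and e: "\<forall>p<s*t. Bf s t S1 p = Bf s t S2 p"
  shows "S1 = S2"
proof (rule ext)
  fix c
  show "S1 c = S2 c"
  proof (cases "c < s")
    case True
    show ?thesis
    proof (rule set_eqI)
      fix j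
      show "(j \<in> S1 c) = (j \<in> S2 c)"
      proof (cases "j < t")
        case jt: True
        define p where "p = c * t + j"
        have pd: "p div t = c" "p mod t = j" unfolding p_def using jt by simp_all
        have "(c + 1) * t \<le> s * t" using True by (intro mult_le_mono1) simp
        then have "p < s * t" unfolding p_def using jt by simp
        then have "Bf s t S1 p = Bf s t S2 p" using e by simp
        then have "(if j \<in> S1 c then xL s c else yL c) = (if j \<in> S2 c then xL s c else yL c)"
          unfolding Bf_def pd .
        then show ?thesis using xy_ne[OF s True]
          by (cases "j \<in> S1 c"; cases "j \<in> S2 c") simp_all
      next
        case False
        then have "j \<notin> S1 c" "j \<notin> S2 c" using Params_S(3)[OF S1 True] Params_S(3)[OF S2 True] by auto
        then show ?thesis by simp
      qed
    qed
  next
    case False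
    have "S1 c = undefined" by (rule PiE_arb[OF S1[unfolded Params_def]]) (use False in simp)
    moreover have "S2 c = undefined" by (rule PiE_arb[OF S2[unfolded Params_def]]) (use False in simp)
    ultimately show ?thesis by simp
  qed
qed

definition word :: "nat \<Rightarrow> nat \<Rightarrow> (nat \<Rightarrow> nat set) \<Rightarrow> nat list" where
  "word s t S = map (Wf t (Bf s t S)) [0..<s*t]"

theorem lower_bound:
  assumes s: "s \<ge> 2" and t: "t \<ge> 2"
  shows "(\<Prod>c<s. (card (Dset t c) choose aL t c)) \<le> A321_comb s t"
proof -
  have t1: "t \<ge> 1" using t by simp
  let ?A = "{w \<in> linear_extensions s t. \<not> contains_321 w}"
  have into: "word s t S \<in> ?A" if S: "S \<in> Params s t" for S
  proof -
    interpret blockfun s t "Bf s t S" by (rule Bf_blockfun[OF s t1 S])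
    have "word s t S \<in> linear_extensions s t" unfolding word_def
      by (rule word_LE) (use Bf_hS[OF s t S] in auto)
    moreover have "\<not> contains_321 (word s t S)" unfolding word_def
      by (rule word_no321) (use Bf_no321[OF s] in blast)
    ultimately show ?thesis by simp
  qed
  have inj: "inj_on (word s t) (Params s t)"
  proof (rule inj_onI)
    fix S1 S2 assume S1: "S1 \<in> Params s t" and S2: "S2 \<in> Params s t" and e: "word s t S1 = word s t S2"
    have "\<forall>p<s*t. Bf s t S1 p = Bf s t S2 p"
    proof (intro allI impI)
      fix p assume p: "p < s * t"
      have "Wf t (Bf s t S1) p = Wf t (Bf s t S2) p"
        using arg_cong[OF e, of "\<lambda>w. w ! p"] p unfolding word_def by simp
      then show "Bf s t S1 p = Bf s t S2 p"
        using blockfun.blk_W[OF Bf_blockfun[OF s t1 S1] p] blockfun.blk_W[OF Bf_blockfun[OF s t1 S2] p]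
        by simp
    qed
    then show "S1 = S2" by (rule Params_inj[OF s t1 S1 S2])
  qed
  have finA: "finite ?A"
  proof (rule finite_subset)
    show "?A \<subseteq> {xs. set xs \<subseteq> {1..s*t} \<and> length xs = s*t}"
      using LE_basic(2,3) by auto
    show "finite {xs. set xs \<subseteq> {1..s*t} \<and> length xs = s*t}" by (rule finite_lists_length_eq) simp
  qed
  have "card (Params s t) = card (word s t ` Params s t)" using card_image[OF inj] by simp
  also have "\<dots> \<le> card ?A" using into finA by (intro card_mono) auto
  finally have "card (Params s t) \<le> A321_comb s t" unfolding A321_comb_def .
  moreover have "card (Params s t) = (\<Prod>c<s. (card (Dset t c) choose aL t c))"
  proof -
    have "card (Params s t) = (\<Prod>c\<in>{0..<s}. card {A. A \<subseteq> Dset t c \<and> card A = aL t c})"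
      unfolding Params_def by (simp add: card_PiE)
    also have "\<dots> = (\<Prod>c\<in>{0..<s}. (card (Dset t c) choose aL t c))"
      by (rule prod.cong[OF refl]) (simp add: n_subsets Dset_def)
    finally show ?thesis by (simp add: lessThan_atLeast0)
  qed
  ultimately show ?thesis by simp
qed



lemma central_bound:
  assumes "k = m div 2 \<or> k = m - m div 2"
  shows "2 ^ m \<le> (m + 1) * (m choose k)"
proof -
  have ck: "m choose k = m choose (m div 2)"
    using assms binomial_symmetric[of "m div 2" m] by auto
  have "(2::nat) ^ m = (\<Sum>i\<le>m. m choose i)" by (simp add: choose_row_sum)
  also have "\<dots> \<le> (\<Sum>i\<le>m. m choose (m div 2))" by (intro sum_mono binomial_maximum)
  also have "\<dots> = (m + 1) * (m choose (m div 2))" by simp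
  finally show ?thesis using ck by simp
qed

lemma factor_bound:
  assumes t: "t \<ge> 2"
  shows "2 ^ t \<le> 2 * (t + 1) * (card (Dset t c) choose aL t c)"
proof (cases "c = 0")
  case True
  have cd: "card (Dset t c) = t - 1" using True unfolding Dset_def by simp
  have a: "aL t c = t div 2" using True unfolding aL_def by simp
  have k: "t div 2 = (t - 1) div 2 \<or> t div 2 = (t - 1) - (t - 1) div 2"
  proof -
    obtain m where m: "t = m + 1" using t by (metis add.commute le_Suc_ex one_add_one add_leD1)
    show ?thesis unfolding m by (cases "even m") (auto elim!: evenE oddE)
  qed
  have "2 ^ (t - 1) \<le> (t - 1 + 1) * ((t - 1) choose (t div 2))" by (rule central_bound[OF k])
  then have "2 * 2 ^ (t - 1) \<le> 2 * t * ((t - 1) choose (t div 2))" using t by simp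
  moreover have "2 * 2 ^ (t - 1) = (2::nat) ^ t" using t by (simp add: power_eq_if)
  moreover have "2 * t * ((t - 1) choose (t div 2)) \<le> 2 * (t + 1) * ((t - 1) choose (t div 2))" by simp
  ultimately show ?thesis unfolding cd a by linarith
next
  case False
  have cd: "card (Dset t c) = t" using False unfolding Dset_def by simp
  have k: "aL t c = t div 2 \<or> aL t c = t - t div 2" unfolding aL_def by simp
  have "2 ^ t \<le> (t + 1) * (t choose aL t c)" by (rule central_bound[OF k])
  then show ?thesis unfolding cd by simp
qed

lemma prod_bound:
  assumes s: "s \<ge> 2" and t: "t \<ge> 2"
  shows "2 ^ (s * t) \<le> (2 * (t + 1)) ^ s * A321_comb s t"
proof -
  have "(\<Prod>c<s. (2::nat) ^ t) = (2 ^ t) ^ s" by simp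
  also have "\<dots> = 2 ^ (t * s)" by (rule power_mult[symmetric])
  finally have "(2::nat) ^ (s * t) = (\<Prod>c<s. 2 ^ t)" by (simp add: mult.commute)
  also have "\<dots> \<le> (\<Prod>c<s. 2 * (t + 1) * (card (Dset t c) choose aL t c))"
    by (intro prod_mono) (use factor_bound[OF t] in auto)
  also have "\<dots> = (\<Prod>c<s. 2 * (t + 1)) * (\<Prod>c<s. card (Dset t c) choose aL t c)"
    by (rule prod.distrib)
  also have "\<dots> = (2 * (t + 1)) ^ s * (\<Prod>c<s. card (Dset t c) choose aL t c)" by simp
  also have "\<dots> \<le> (2 * (t + 1)) ^ s * A321_comb s t" using lower_bound[OF s t] by (intro mult_le_mono2)
  finally show ?thesis .
qed

lemma root_lin_lim:
  fixes a b :: nat assumes a: "a \<ge> 1" and b: "b \<ge> 1"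
  shows "(\<lambda>t. root t (real (a * t + b))) \<longlonglongrightarrow> 1"
proof (rule tendsto_sandwich[of "\<lambda>_. 1" _ sequentially "\<lambda>t. root t (real (a + b)) * root t (real t)"])
  show "eventually (\<lambda>t. 1 \<le> root t (real (a * t + b))) sequentially"
    unfolding eventually_sequentially
  proof (intro exI[of _ 1] allI impI)
    fix t :: nat assume t: "t \<ge> 1"
    have "1 \<le> a * t + b" using b by simp
    then have "(1::real) \<le> real (a * t + b)" by (metis of_nat_1 of_nat_le_iff)
    then show "1 \<le> root t (real (a * t + b))" using t by simp
  qed
  show "eventually (\<lambda>t. root t (real (a * t + b)) \<le> root t (real (a + b)) * root t (real t)) sequentially"
    unfolding eventually_sequentially
  proof (intro exI[of _ 1] allI impI)
    fix t :: nat assume t: "t \<ge> 1"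
    have "a * t + b \<le> (a + b) * t" using t by (simp add: algebra_simps)
    then have "real (a * t + b) \<le> real (a + b) * real t" by (metis of_nat_le_iff of_nat_mult)
    then show "root t (real (a * t + b)) \<le> root t (real (a + b)) * root t (real t)"
      using t by (simp add: real_root_mult[symmetric])
  qed
  show "(\<lambda>_. 1::real) \<longlonglongrightarrow> 1" by simp
  have "(\<lambda>t. root t (real (a + b)) * root t (real t)) \<longlonglongrightarrow> 1 * 1"
    by (intro tendsto_mult LIMSEQ_root_const LIMSEQ_root) (use a in simp)
  then show "(\<lambda>t. root t (real (a + b)) * root t (real t)) \<longlonglongrightarrow> 1" by simp
qed

lemma r2: "t \<ge> 1 \<Longrightarrow> root t (2 ^ (s * t)) = (2::real) ^ s"
proof -
  assume t: "t \<ge> 1"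
  have "(2::real) ^ (s * t) = (2 ^ s) ^ t" by (simp add: power_mult)
  then show ?thesis using t by (simp add: real_root_power_cancel)
qed

lemma lower_ev:
  assumes s: "s \<ge> 2" and t: "t \<ge> 2"
  shows "2 ^ s / root t (real (2 * t + 2)) ^ s \<le> root t (real (A321_comb s t))"
proof -
  have "2 ^ (s * t) \<le> (2 * (t + 1)) ^ s * A321_comb s t" by (rule prod_bound[OF s t])
  then have "real (2 ^ (s * t)) \<le> real ((2 * (t + 1)) ^ s * A321_comb s t)" by (simp only: of_nat_le_iff)
  moreover have "real (2 ^ (s * t)) = (2::real) ^ (s * t)" by simp
  moreover have "real ((2 * (t + 1)) ^ s * A321_comb s t) = real (2 * t + 2) ^ s * real (A321_comb s t)"
    by simp
  ultimately have "(2::real) ^ (s * t) \<le> real (2 * t + 2) ^ s * real (A321_comb s t)" by simp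
  then have "root t (2 ^ (s * t)) \<le> root t (real (2 * t + 2) ^ s * real (A321_comb s t))"
    using t by (subst real_root_le_iff) simp_all
  also have "\<dots> = root t (real (2 * t + 2)) ^ s * root t (real (A321_comb s t))"
    using t by (simp only: real_root_mult real_root_power)
  finally have "2 ^ s \<le> root t (real (2 * t + 2)) ^ s * root t (real (A321_comb s t))"
    using r2[of t s] t by simp
  moreover have "root t (real (2 * t + 2)) ^ s > 0" using t by simp
  ultimately show ?thesis by (simp add: divide_le_eq mult.commute)
qed

lemma upper_ev:
  assumes t: "t \<ge> 1"
  shows "root t (real (A321_comb s t)) \<le> 2 ^ s * root t (real (s * t + 1)) ^ (2 * s)"
proof -
  have "A321_comb s t \<le> 2 ^ (s*t) * (s*t+1)^s * (s*t+1)^s" by (rule upper_bound[OF t])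
  also have "\<dots> = 2 ^ (s*t) * (s*t+1)^(2*s)" by (simp add: power_add[symmetric] mult_2)
  finally have "real (A321_comb s t) \<le> real (2 ^ (s*t) * (s*t+1)^(2*s))" by (simp only: of_nat_le_iff)
  moreover have "real (2 ^ (s*t) * (s*t+1)^(2*s)) = 2 ^ (s*t) * real (s*t+1)^(2*s)" by simp
  ultimately have "real (A321_comb s t) \<le> 2 ^ (s*t) * real (s*t+1)^(2*s)" by simp
  then have "root t (real (A321_comb s t)) \<le> root t (2 ^ (s*t) * real (s*t+1)^(2*s))"
    using t by (subst real_root_le_iff) simp_all
  also have "\<dots> = root t (2 ^ (s*t)) * root t (real (s*t+1)) ^ (2*s)"
    using t by (simp only: real_root_mult real_root_power)
  also have "\<dots> = 2 ^ s * root t (real (s * t + 1)) ^ (2 * s)" using r2[of t s] t by simp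
  finally show ?thesis .
qed

theorem theorem6:
  fixes s :: nat
  assumes "s \<ge> 2"
  shows "(\<lambda>t. root t (real (A321_comb s t))) \<longlonglongrightarrow> 2 ^ s"
proof (rule tendsto_sandwich[of "\<lambda>t. 2 ^ s / root t (real (2 * t + 2)) ^ s" _ sequentially
        "\<lambda>t. 2 ^ s * root t (real (s * t + 1)) ^ (2 * s)"])
  show "eventually (\<lambda>t. 2 ^ s / root t (real (2 * t + 2)) ^ s \<le> root t (real (A321_comb s t))) sequentially"
    unfolding eventually_sequentially using lower_ev[OF assms] by blast
  show "eventually (\<lambda>t. root t (real (A321_comb s t)) \<le> 2 ^ s * root t (real (s * t + 1)) ^ (2 * s)) sequentially"
    unfolding eventually_sequentially using upper_ev by blast
  have "(\<lambda>t. 2 ^ s / root t (real (2 * t + 2)) ^ s) \<longlonglongrightarrow> 2 ^ s / 1 ^ s"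
    by (intro tendsto_divide tendsto_power tendsto_const root_lin_lim) simp_all
  then show "(\<lambda>t. 2 ^ s / root t (real (2 * t + 2)) ^ s) \<longlonglongrightarrow> 2 ^ s" by simp
  have "(\<lambda>t. 2 ^ s * root t (real (s * t + 1)) ^ (2 * s)) \<longlonglongrightarrow> 2 ^ s * 1 ^ (2 * s)"
    by (intro tendsto_mult tendsto_power tendsto_const root_lin_lim) (use assms in simp_all)
  then show "(\<lambda>t. 2 ^ s * root t (real (s * t + 1)) ^ (2 * s)) \<longlonglongrightarrow> 2 ^ s" by simp
qed


end
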